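(* Let $f:[-1,1]\to[0,1]$ be non-increasing with $f(0)=\tfrac12$ and continuous at $0$, and let $\delta\in(0,\tfrac12]$. Consider the sequential design (truncated Wei's adaptive coin design) with $p_1=\tfrac12$ and, for $i\ge2$, $$p_i=\min\{\max\{f(R_{i-1}),\delta\},1-\delta\},\qquad R_{i-1}=\frac{D_{i-1}}{i-1},$$ where $D_k=m_k-n_k$, with $m_k$ and $n_k$ the numbers of units among the first $k$ assigned to treatment and control respectively, and $K_i\mid\mathcal F_{i-1}\sim\mathrm{Bernoulli}(p_i)$. Then $p_i\xrightarrow{p}\tfrac12$ as $i\to\infty$; i.e. the design is strongly stable with $p^\star=\tfrac12$.
   Context: $K_i\in\{0,1\}$ is the treatment indicator of unit $i$ and $\mathcal F_{i-1}=\sigma(K_1,\dots,K_{i-1})$ (together with the observed outcomes up to unit $i-1$). A sequential design $(p_i)$ is strongly stable if there is a non-random $p^\star\in(0,1)$ with $p_i\xrightarrow{p}p^\star$. *)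

theory Defs
  imports "HOL-Probability.Probability"
begin

text \<open>Units are indexed by i = 1, 2, ...; K i w is True iff unit i is assigned to treatment.
  D k = m_k - n_k (treated minus control among the first k units).\<close>

definition imbalance :: "(nat \<Rightarrow> 'a \<Rightarrow> bool) \<Rightarrow> nat \<Rightarrow> 'a \<Rightarrow> real" where
  "imbalance K k w = (\<Sum>j\<in>{1..k}. if K j w then 1 else -1)"

definition wei_p :: "(real \<Rightarrow> real) \<Rightarrow> real \<Rightarrow> (nat \<Rightarrow> 'a \<Rightarrow> bool) \<Rightarrow> nat \<Rightarrow> 'a \<Rightarrow> real" where
  "wei_p f \<delta> K i w =
     (if i \<le> 1 then 1/2
      else min (max (f (imbalance K (i - 1) w / real (i - 1))) \<delta>) (1 - \<delta>))"

end

theory Submission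
  imports Defs
begin

lemma clamp_close:
  fixes a \<delta> :: real
  assumes "\<delta> \<le> 1/2"
  shows "\<bar>min (max a \<delta>) (1 - \<delta>) - 1/2\<bar> \<le> \<bar>a - 1/2\<bar>"
  using assms by (simp add: min_def max_def abs_if)

lemma imbalance_Suc:
  "imbalance K (Suc m) w = imbalance K m w + (if K (Suc m) w then 1 else -1)"
  unfolding imbalance_def by (simp add: sum.cl_ivl_Suc)

lemma imbalance_int:
  "imbalance K m w = real_of_int (\<Sum>j\<in>{1..m}. if K j w then 1 else -1)"
  unfolding imbalance_def by (simp add: of_int_sum if_distrib cong: if_cong)

lemma imbalance_abs: "\<bar>imbalance K m w\<bar> \<le> real m"
proof -
  have "\<bar>imbalance K m w\<bar> \<le> (\<Sum>j\<in>{1..m}. \<bar>if K j w then 1 else -1 :: real\<bar>)"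
    unfolding imbalance_def by (rule sum_abs)
  also have "\<dots> = (\<Sum>j\<in>{1..m}. 1)" by (rule sum.cong) auto
  also have "\<dots> = real m" by simp
  finally show ?thesis .
qed

lemma imbalance_finite: "finite ((\<lambda>w. imbalance K m w) ` S)"
proof -
  have "(\<lambda>w. imbalance K m w) ` S \<subseteq> real_of_int ` {- int m .. int m}"
  proof
    fix x assume "x \<in> (\<lambda>w. imbalance K m w) ` S"
    then obtain w where x: "x = imbalance K m w" by auto
    define z where "z = (\<Sum>j\<in>{1..m}. if K j w then 1 else -1 :: int)"
    have xz: "x = real_of_int z" using x imbalance_int z_def by simp
    have "\<bar>real_of_int z\<bar> \<le> real m" using imbalance_abs[of K m w] xz x by simp
    then have "\<bar>z\<bar> \<le> int m" by linarith
    then show "x \<in> real_of_int ` {- int m .. int m}" using xz by (intro rev_image_eqI[of z]) auto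
  qed
  then show ?thesis by (rule finite_subset) simp
qed

theorem lemma1:
  fixes M :: "'a measure" and F :: "nat \<Rightarrow> 'a measure"
    and K :: "nat \<Rightarrow> 'a \<Rightarrow> bool" and f :: "real \<Rightarrow> real" and \<delta> :: real
  assumes "prob_space M"
    and f_range: "\<forall>x\<in>{-1..1}. 0 \<le> f x \<and> f x \<le> 1"
    and f_noninc: "\<forall>x y. -1 \<le> x \<and> x \<le> y \<and> y \<le> 1 \<longrightarrow> f y \<le> f x"
    and f0: "f 0 = 1/2"
    and f_cont: "continuous (at 0 within {-1..1}) f"
    and \<delta>: "0 < \<delta>" "\<delta> \<le> 1/2"
    and filt_space: "\<And>n. space (F n) = space M"
    and filt_sub: "\<And>n. sets (F n) \<subseteq> sets M"
    and filt_mono: "\<And>m n. m \<le> n \<Longrightarrow> sets (F m) \<subseteq> sets (F n)"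
    and adapted: "\<And>n. K n \<in> measurable (F n) (count_space UNIV)"
    and design: "\<And>i A. i \<ge> 1 \<Longrightarrow> A \<in> sets (F (i - 1)) \<Longrightarrow>
        measure M (A \<inter> {w \<in> space M. K i w}) = (\<integral>w\<in>A. wei_p f \<delta> K i w \<partial>M)"
  shows "\<forall>\<epsilon>>0. ((\<lambda>i. measure M {w \<in> space M. \<bar>wei_p f \<delta> K i w - 1/2\<bar> > \<epsilon>})
            \<longlongrightarrow> 0) sequentially"
proof -
  interpret prob_space M by fact
  define D where "D = (\<lambda>m w. imbalance K m w)"
  define P where "P = (\<lambda>i w. wei_p f \<delta> K i w)"
  define S where "S = (\<lambda>k. {w \<in> space M. K k w})"
  have Kmeas: "K j \<in> measurable (F n) (count_space UNIV)" if "j \<le> n" for j n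
    using measurable_mono[of "count_space UNIV" "count_space UNIV" "F j" "F n"] adapted[of j]
      filt_mono[OF that] filt_space by auto
  have Dmeas: "D m \<in> borel_measurable (F n)" if "m \<le> n" for m n
  proof -
    have "(\<lambda>w. (\<lambda>b. if b then 1 else -1::real) (K j w)) \<in> borel_measurable (F n)" if "j \<in> {1..m}" for j
      by (rule measurable_compose[OF Kmeas borel_measurable_count_space]) (use that \<open>m \<le> n\<close> in auto)
    then show ?thesis unfolding D_def imbalance_def by (intro borel_measurable_sum) auto
  qed
  have Dsimp: "simple_function (F n) (D m)" if "m \<le> n" for m n
    by (rule simple_function_borel_measurable[OF Dmeas[OF that]])
       (simp add: D_def filt_space imbalance_finite)
  have measM: "g \<in> borel_measurable M" if "g \<in> borel_measurable (F n)" for g n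
    using measurable_mono[of borel borel "F n" M] filt_sub filt_space that by auto
  have setsM: "A \<in> sets M" if "A \<in> sets (F n)" for A n
    using filt_sub that by auto
  have Pform: "P (Suc m) = (\<lambda>x. if m = 0 then 1/2 else min (max (f (x / real m)) \<delta>) (1 - \<delta>)) \<circ> D m" for m
    unfolding P_def D_def wei_p_def by (auto simp: fun_eq_iff)
  have Psimp: "simple_function (F m) (P (Suc m))" for m
    unfolding Pform by (rule simple_function_compose[OF Dsimp]) simp
  have PmeasM: "P (Suc m) \<in> borel_measurable M" for m
    by (rule measM[OF borel_measurable_simple_function[OF Psimp]])
  have Pbound: "0 \<le> P i w \<and> P i w \<le> 1" for i w
    using \<delta> unfolding P_def wei_p_def by (auto simp: min_def max_def)
  have DmeasM: "D m \<in> borel_measurable M" for m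
    by (rule measM[OF Dmeas[OF order_refl]])
  have Dabs: "\<bar>D m w\<bar> \<le> real m" for m w unfolding D_def by (rule imbalance_abs)
  have intD: "integrable M (\<lambda>w. D m w * g w)" if "g \<in> borel_measurable M" "\<And>w. \<bar>g w\<bar> \<le> 1" for m g
  proof (rule integrable_const_bound[where B="real m"])
    show "AE x in M. norm (D m x * g x) \<le> real m"
    proof (intro AE_I2)
      fix x
      have "\<bar>D m x\<bar> * \<bar>g x\<bar> \<le> real m * 1" by (rule mult_mono) (use Dabs that in auto)
      then show "norm (D m x * g x) \<le> real m" by (simp add: abs_mult)
    qed
  qed (use that DmeasM in auto)
  have SMk: "S k \<in> sets M" for k
  proof -
    have "K k \<in> measurable M (count_space UNIV)"
      using measurable_mono[of "count_space UNIV" "count_space UNIV" "F k" M] adapted[of k]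
        filt_sub filt_space by auto
    then show ?thesis unfolding S_def by measurable
  qed
  have key: "(\<integral>w. D m w * indicator (S (Suc m)) w \<partial>M) = (\<integral>w. D m w * P (Suc m) w \<partial>M)" for m
  proof -
    define V where "V = D m ` space M"
    define A where "A = (\<lambda>y. D m -` {y} \<inter> space M)"
    have finV: "finite V" unfolding V_def D_def by (rule imbalance_finite)
    have AF: "A y \<in> sets (F m)" if "y \<in> V" for y
      using simple_functionD(2)[OF Dsimp[OF order_refl[of m]], of "{y}"] that
      unfolding A_def V_def by (simp add: filt_space)
    have AM: "A y \<in> sets M" if "y \<in> V" for y using setsM[OF AF[OF that]] .
    note SM = SMk[of "Suc m"]
    have rep: "D m w = (\<Sum>y\<in>V. y * indicator (A y) w)" if "w \<in> space M" for w
    proof -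
      have "(\<Sum>y\<in>V. y * indicator (A y) w) = (\<Sum>y\<in>V. if y = D m w then y else 0)"
        by (rule sum.cong) (auto simp: A_def indicator_def that)
      also have "\<dots> = D m w" using finV that by (simp add: V_def)
      finally show ?thesis by simp
    qed
    have "(\<integral>w. D m w * indicator (S (Suc m)) w \<partial>M) = (\<integral>w. (\<Sum>y\<in>V. y * indicator (A y \<inter> S (Suc m)) w) \<partial>M)"
      by (rule Bochner_Integration.integral_cong[OF refl]) (simp add: rep sum_distrib_right indicator_inter_arith mult.assoc)
    also have "\<dots> = (\<Sum>y\<in>V. y * measure M (A y \<inter> S (Suc m)))"
    proof -
      have "(\<integral>w. (\<Sum>y\<in>V. y * indicator (A y \<inter> S (Suc m)) w) \<partial>M)
          = (\<Sum>y\<in>V. (\<integral>w. y * indicator (A y \<inter> S (Suc m)) w \<partial>M))"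
        by (rule Bochner_Integration.integral_sum) (use AM SM in \<open>auto intro!: integrable_real_indicator simp: sets.Int less_top[symmetric]\<close>)
      also have "\<dots> = (\<Sum>y\<in>V. y * measure M (A y \<inter> S (Suc m)))"
        by (rule sum.cong[OF refl]) (use AM SM in \<open>auto simp: sets.Int\<close>)
      finally show ?thesis .
    qed
    also have "\<dots> = (\<Sum>y\<in>V. y * (\<integral>w. indicator (A y) w * P (Suc m) w \<partial>M))"
    proof (rule sum.cong[OF refl])
      fix y assume y: "y \<in> V"
      have "measure M (A y \<inter> S (Suc m)) = (\<integral>w\<in>A y. wei_p f \<delta> K (Suc m) w \<partial>M)"
        unfolding S_def by (rule design) (use AF[OF y] in auto)
      then show "y * measure M (A y \<inter> S (Suc m)) = y * (\<integral>w. indicator (A y) w * P (Suc m) w \<partial>M)"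
        by (simp add: set_lebesgue_integral_def P_def)
    qed
    also have "\<dots> = (\<integral>w. (\<Sum>y\<in>V. y * (indicator (A y) w * P (Suc m) w)) \<partial>M)"
    proof (subst Bochner_Integration.integral_sum)
      fix y assume y: "y \<in> V"
      have "integrable M (\<lambda>w. P (Suc m) w * indicator (A y) w)"
        by (rule integrable_real_mult_indicator[OF AM[OF y]]) 
           (rule integrable_const_bound[where B=1], use Pbound PmeasM in auto)
      then show "integrable M (\<lambda>w. y * (indicator (A y) w * P (Suc m) w))"
        by (simp add: mult.commute)
    qed simp
    also have "\<dots> = (\<integral>w. D m w * P (Suc m) w \<partial>M)"
      by (rule Bochner_Integration.integral_cong[OF refl]) (simp add: rep sum_distrib_right mult.assoc)
    finally show ?thesis .
  qed
  have D0: "D 0 w = 0" for w unfolding D_def imbalance_def by simp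
  have sign: "D m w * (2 * P (Suc m) w - 1) \<le> 0" for m w
  proof (cases "m = 0")
    case True then show ?thesis by (simp add: D0)
  next
    case False
    let ?x = "D m w / real m"
    have Pw: "P (Suc m) w = min (max (f ?x) \<delta>) (1 - \<delta>)"
      using False unfolding P_def D_def wei_p_def by simp
    have xb0: "\<bar>?x\<bar> \<le> 1" using Dabs[of m w] False by (simp add: abs_divide divide_le_eq)
    have xb: "-1 \<le> ?x" "?x \<le> 1" using xb0 unfolding abs_le_iff by linarith+
    show ?thesis
    proof (cases "D m w > 0")
      case True
      then have "?x > 0" using False by simp
      then have "f ?x \<le> f 0" using f_noninc[rule_format, of 0 ?x] xb by linarith
      then have "f ?x \<le> 1/2" using f0 by simp
      then have "P (Suc m) w \<le> 1/2" using Pw \<delta> by (simp add: min_def max_def)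
      then show ?thesis using True by (simp add: mult_nonneg_nonpos)
    next
      case nT: False
      show ?thesis
      proof (cases "D m w = 0")
        case True then show ?thesis by simp
      next
        case F2: False
        then have "?x < 0" using nT False by (simp add: divide_neg_pos)
        then have "f ?x \<ge> f 0" using f_noninc[rule_format, of ?x 0] xb by linarith
        then have "f ?x \<ge> 1/2" using f0 by simp
        then have "P (Suc m) w \<ge> 1/2" using Pw \<delta> by (simp add: min_def max_def)
        then show ?thesis using nT F2 by (simp add: mult_nonpos_nonneg)
      qed
    qed
  qed
  have step: "(\<integral>w. D m w * (if K (Suc m) w then 1 else -1) \<partial>M) \<le> 0" for m
  proof -
    have i1: "integrable M (\<lambda>w. D m w * indicator (S (Suc m)) w)"
      by (rule intD) (use SMk in auto)
    have i2: "integrable M (\<lambda>w. D m w * 1)" by (rule intD) auto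
    have i3: "integrable M (\<lambda>w. D m w * P (Suc m) w)" by (rule intD) (use PmeasM Pbound in \<open>auto simp: abs_le_iff\<close>)
    have "(\<integral>w. D m w * (if K (Suc m) w then 1 else -1) \<partial>M)
        = (\<integral>w. 2 * (D m w * indicator (S (Suc m)) w) - D m w * 1 \<partial>M)"
      by (rule Bochner_Integration.integral_cong[OF refl]) (auto simp: S_def indicator_def)
    also have "\<dots> = 2 * (\<integral>w. D m w * indicator (S (Suc m)) w \<partial>M) - (\<integral>w. D m w * 1 \<partial>M)"
      using i1 i2 by simp
    also have "\<dots> = 2 * (\<integral>w. D m w * P (Suc m) w \<partial>M) - (\<integral>w. D m w * 1 \<partial>M)"
      using key by simp
    also have "\<dots> = (\<integral>w. 2 * (D m w * P (Suc m) w) - D m w * 1 \<partial>M)"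
      using i3 i2 by simp
    also have "\<dots> = - (\<integral>w. - (D m w * (2 * P (Suc m) w - 1)) \<partial>M)"
    proof -
      have eq: "(\<lambda>w. 2 * (D m w * P (Suc m) w) - D m w * 1) = (\<lambda>w. - (- (D m w * (2 * P (Suc m) w - 1))))"
        by (auto simp: algebra_simps fun_eq_iff)
      show ?thesis by (subst eq) (rule integral_minus)
    qed
    also have "\<dots> \<le> 0"
    proof -
      have "0 \<le> (\<integral>w. - (D m w * (2 * P (Suc m) w - 1)) \<partial>M)"
        by (rule integral_nonneg_AE) (use sign in \<open>auto intro!: AE_I2\<close>)
      then show ?thesis by simp
    qed
    finally show ?thesis .
  qed
  have XM: "(\<lambda>w. (\<lambda>b. if b then 1 else -1::real) (K k w)) \<in> borel_measurable M" for k
  proof -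
    have "K k \<in> measurable M (count_space UNIV)"
      using measurable_mono[of "count_space UNIV" "count_space UNIV" "F k" M] adapted[of k]
        filt_sub filt_space by auto
    then show ?thesis by (rule measurable_compose[OF _ borel_measurable_count_space])
  qed
  have intD2: "integrable M (\<lambda>w. (D m w)^2)" for m
  proof -
    have "integrable M (\<lambda>w. D m w * D m w / real m)"
    proof (cases "m = 0")
      case True then show ?thesis by (simp add: D0)
    next
      case False
      have "integrable M (\<lambda>w. D m w * (D m w / real m))"
        by (rule intD) (use DmeasM Dabs False in \<open>auto simp: abs_divide divide_le_eq\<close>)
      then show ?thesis by simp
    qed
    then have "integrable M (\<lambda>w. real m * (D m w * D m w / real m))" by (intro integrable_mult_right)
    moreover have "(\<lambda>w. real m * (D m w * D m w / real m)) = (\<lambda>w. (D m w)^2)"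
    proof (cases "m = 0")
      case True then show ?thesis by (simp add: D0 fun_eq_iff)
    next
      case False then show ?thesis by (simp add: fun_eq_iff power2_eq_square)
    qed
    ultimately show ?thesis by simp
  qed
  have sq: "(\<integral>w. (D m w)^2 \<partial>M) \<le> real m" for m
  proof (induction m)
    case 0 then show ?case by (simp add: D0)
  next
    case (Suc m)
    have i1: "integrable M (\<lambda>w. D m w * (if K (Suc m) w then 1 else -1))"
      by (rule intD) (use XM[of "Suc m"] in auto)
    have "(\<integral>w. (D (Suc m) w)^2 \<partial>M) = (\<integral>w. (D m w)^2 + 2 * (D m w * (if K (Suc m) w then 1 else -1)) + 1 \<partial>M)"
      by (rule Bochner_Integration.integral_cong[OF refl])
         (simp add: D_def imbalance_Suc power2_eq_square algebra_simps)
    also have "\<dots> = (\<integral>w. (D m w)^2 \<partial>M) + 2 * (\<integral>w. D m w * (if K (Suc m) w then 1 else -1) \<partial>M) + 1"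
      using i1 intD2[of m] by (simp add: prob_space)
    also have "\<dots> \<le> real m + 2 * 0 + 1"
      using Suc.IH step[of m] by linarith
    finally show ?case by simp
  qed
  have cheb: "measure M {w \<in> space M. \<eta> \<le> \<bar>D m w / real m\<bar>} \<le> 1 / (\<eta>^2 * real m)"
    if "\<eta> > 0" "m \<ge> 1" for \<eta> m
  proof -
    have mpos: "real m > 0" using that by simp
    have c: "(\<eta> * real m)^2 > 0" using that by simp
    have set_eq: "{w \<in> space M. \<eta> \<le> \<bar>D m w / real m\<bar>} = {w \<in> space M. (\<eta> * real m)^2 \<le> (D m w)^2}"
    proof -
      have "\<eta> \<le> \<bar>D m w / real m\<bar> \<longleftrightarrow> (\<eta> * real m)^2 \<le> (D m w)^2" for w
      proof -
        have "\<eta> \<le> \<bar>D m w / real m\<bar> \<longleftrightarrow> \<bar>\<eta> * real m\<bar> \<le> \<bar>D m w\<bar>"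
          using mpos that(1) by (simp add: abs_divide le_divide_eq abs_mult)
        also have "\<dots> \<longleftrightarrow> (\<eta> * real m)^2 \<le> (D m w)^2" by (rule abs_le_square_iff)
        finally show ?thesis .
      qed
      then show ?thesis by auto
    qed
    have "measure M {w \<in> space M. (\<eta> * real m)^2 \<le> (D m w)^2} \<le> (\<integral>w. (D m w)^2 \<partial>M) / (\<eta> * real m)^2"
      by (rule integral_Markov_inequality_measure[OF intD2 _ _ c]) auto
    also have "\<dots> \<le> real m / (\<eta> * real m)^2"
      by (rule divide_right_mono[OF sq]) simp
    also have "\<dots> = 1 / (\<eta>^2 * real m)"
      using mpos by (simp add: power2_eq_square field_simps)
    finally show ?thesis using set_eq by simp
  qed
  show ?thesis
  proof (intro allI impI)
    fix \<epsilon> :: real assume eps: "\<epsilon> > 0"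
    obtain \<eta> where eta: "\<eta> > 0" and etaP: "\<And>x. x \<in> {-1..1} \<Longrightarrow> dist x 0 < \<eta> \<Longrightarrow> dist (f x) (f 0) < \<epsilon>"
      using f_cont eps unfolding continuous_within_eps_delta by metis
    have bound: "measure M {w \<in> space M. \<bar>wei_p f \<delta> K i w - 1/2\<bar> > \<epsilon>} \<le> (2 / \<eta>^2) / real i"
      if "i \<ge> 2" for i
    proof -
      obtain m where im: "i = Suc m" and m1: "m \<ge> 1"
      proof -
        have "i = Suc (i - 1)" "i - 1 \<ge> 1" using \<open>i \<ge> 2\<close> by auto
        then show ?thesis using that by blast
      qed
      have sub: "{w \<in> space M. \<bar>wei_p f \<delta> K i w - 1/2\<bar> > \<epsilon>} \<subseteq> {w \<in> space M. \<eta> \<le> \<bar>D m w / real m\<bar>}"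
      proof safe
        fix w assume w: "w \<in> space M" and gt: "\<bar>wei_p f \<delta> K i w - 1/2\<bar> > \<epsilon>"
        show "\<eta> \<le> \<bar>D m w / real m\<bar>"
        proof (rule ccontr)
          assume "\<not> \<eta> \<le> \<bar>D m w / real m\<bar>"
          then have lt: "dist (D m w / real m) 0 < \<eta>" by (simp add: dist_real_def)
          have "\<bar>D m w / real m\<bar> \<le> 1" using Dabs[of m w] m1 by (simp add: abs_divide divide_le_eq)
          then have "D m w / real m \<in> {-1..1}" unfolding atLeastAtMost_iff abs_le_iff by linarith
          from etaP[OF this lt] have fc: "\<bar>f (D m w / real m) - 1/2\<bar> < \<epsilon>" by (simp add: dist_real_def f0)
          have "wei_p f \<delta> K i w = min (max (f (D m w / real m)) \<delta>) (1 - \<delta>)"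
            using m1 im unfolding wei_p_def D_def by simp
          then have "\<bar>wei_p f \<delta> K i w - 1/2\<bar> \<le> \<bar>f (D m w / real m) - 1/2\<bar>"
            using clamp_close[OF \<delta>(2)] by simp
          then show False using fc gt by linarith
        qed
      qed
      have meas: "{w \<in> space M. \<eta> \<le> \<bar>D m w / real m\<bar>} \<in> sets M"
        using DmeasM[of m] by measurable
      have "measure M {w \<in> space M. \<bar>wei_p f \<delta> K i w - 1/2\<bar> > \<epsilon>} \<le> measure M {w \<in> space M. \<eta> \<le> \<bar>D m w / real m\<bar>}"
        by (rule finite_measure_mono[OF sub meas])
      also have "\<dots> \<le> 1 / (\<eta>^2 * real m)" by (rule cheb[OF eta m1])
      also have "\<dots> \<le> (2 / \<eta>^2) / real i"
      proof -
        have a: "1 / (\<eta>^2 * real m) = (1/\<eta>^2) * (1 / real m)" by simp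
        have b: "(2 / \<eta>^2) / real i = (1/\<eta>^2) * (2 / real i)" by simp
        have h1: "1 / real m \<le> 2 / real i" using m1 im by (simp add: divide_simps)
        have h0: "0 \<le> 1/\<eta>^2" by simp
        have "(1/\<eta>^2) * (1 / real m) \<le> (1/\<eta>^2) * (2 / real i)"
          using mult_left_mono[OF h1 h0] .
        then show ?thesis unfolding a b .
      qed
      finally show ?thesis .
    qed
    show "((\<lambda>i. measure M {w \<in> space M. \<bar>wei_p f \<delta> K i w - 1/2\<bar> > \<epsilon>}) \<longlongrightarrow> 0) sequentially"
    proof (rule tendsto_sandwich[of "\<lambda>_. 0" _ _ "\<lambda>i. (2 / \<eta>^2) / real i"])
      show "\<forall>\<^sub>F i in sequentially. 0 \<le> measure M {w \<in> space M. \<bar>wei_p f \<delta> K i w - 1/2\<bar> > \<epsilon>}"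
        by simp
      show "\<forall>\<^sub>F i in sequentially. measure M {w \<in> space M. \<bar>wei_p f \<delta> K i w - 1/2\<bar> > \<epsilon>} \<le> (2 / \<eta>^2) / real i"
        using bound by (intro eventually_sequentiallyI[of 2]) auto
      show "((\<lambda>_. 0::real) \<longlongrightarrow> 0) sequentially" by simp
      show "((\<lambda>i. (2 / \<eta>^2) / real i) \<longlongrightarrow> 0) sequentially" by (rule lim_const_over_n)
    qed
  qed
qed

end
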